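(* Consider the discrete-time closed-loop system $x(t+1)=f(x(t),v(t))$ with $x(t)\in\mathbb{R}^n$, $v(t)\in\mathbb{R}^m$, a constraint set $\mathcal{C}\subset\mathbb{R}^{n+m}$, a set $P\subseteq\mathbb{R}^{n+m}$ (not assumed invariant), $Q=Q^{\mathrm T}\succ0$, and a desired reference sequence $r(t)$. Assume A2, A3, A4 and A5 (see context) hold. Let $v(0)$ satisfy $(x(0),v(0))\in P$, and for $t\ge1$ let $v(t)$ be generated by the modified Command Governor (see context). Suppose there exist scalars $\varepsilon',\delta'>0$ such that, at every time $t$ with $\|x(t)-x_{v(t-1)}\|<\varepsilon'$, the resulting $v(t)$ is feasible, $(x(t),v(t))\in P$, and satisfies $$\|v(t)-r^*(t)\|_Q^2\le\max\{0,\ \|v(t-1)-r^*(t)\|_Q^2-(\delta')^2\},$$ where $r^*(t)=\arg\min_{v\in R_P}\|v-r(t)\|_Q^2$. Then: 1. $(x(t),v(t))\in\mathcal{C}$ for all $t\ge0$. 2. If $r(t)=r_0$ for all $t\ge\hat t$ and $r_0\in R_P$, then there is $T$ with $v(t)=r_0$ for all $t\ge T$. 3. If $r(t)=r_0$ for all $t\ge\hat t$ and $r_0\notin R_P$, then there is $T$ with $v(t)=r^*$ for all $t\ge T$, where $r^*=\arg\min_{v\in R_P}\|v-r_0\|_Q^2$.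
   Context: Notation: $\|w\|_Q^2=w^{\mathrm T}Qw$. For a constant reference $v$ and initial state $x_0$, $x(t;x_0,v)$ denotes the solution of $x(t+1)=f(x(t),v)$ with $x(0)=x_0$. The maximum output admissible set is $O_\infty=\{(x_0,v): (x(t;x_0,v),v)\in\mathcal{C}\ \forall t\in\mathbb{Z}_{\ge0}\}$. For $x\in\mathbb{R}^n$ let $P_x=\{v:(x,v)\in P\}$; for $v\in\mathbb{R}^m$ let $P_v=\{x:(x,v)\in P\}$. Assumptions: A2: For each $v$ there is a unique equilibrium $x_v$ with $f(x_v,v)=x_v$, and $v\mapsto x_v$ is Lipschitz continuous; the set $R_P=\{v:(x_v,v)\in P\}$ and the sets $P_x$ (for every $x$) are closed and convex. A3: There is $\varepsilon>0$ such that for every $v\in R_P$, $P_v$ contains the ball of radius $\varepsilon$ centered at $x_v$. A4: $P\subseteq O_\infty\subseteq\mathcal{C}$. A5: For any reference sequence $v(t)$ with $v(t)-v(t-1)\to0$, the corresponding solution satisfies $x(t)-x_{v(t)}\to0$ as $t\to\infty$. Modified Command Governor: at each time $t\ge1$, some (possibly suboptimal, arbitrary) candidate $v'\in\mathbb{R}^m$ for the problem $\min_v\|r(t)-v\|_Q^2$ s.t. $(x(t),v)\in P$ is produced. The candidate is accepted, $v(t)=v'$, if both $(x(t),v')\in P$ and $\|v'-r(t)\|_Q^2\le\|v(t-1)-r(t)\|_Q^2-\|v'-v(t-1)\|_Q^2$; otherwise it is rejected and $v(t)=v(t-1)$. *)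

theory Defs
  imports "HOL-Analysis.Analysis"
begin

definition qnorm2 :: "real^'m^'m \<Rightarrow> real^'m \<Rightarrow> real" where
  "qnorm2 Q w = w \<bullet> (Q *v w)"

definition traj :: "(real^'n \<Rightarrow> real^'m \<Rightarrow> real^'n) \<Rightarrow> real^'n \<Rightarrow> real^'m \<Rightarrow> nat \<Rightarrow> real^'n" where
  "traj f x0 v t = ((\<lambda>x. f x v) ^^ t) x0"

definition Oinf :: "(real^'n \<Rightarrow> real^'m \<Rightarrow> real^'n) \<Rightarrow> ((real^'n) \<times> (real^'m)) set \<Rightarrow> ((real^'n) \<times> (real^'m)) set" where
  "Oinf f C = {(x0, v). \<forall>t. (traj f x0 v t, v) \<in> C}"

definition secx :: "('a \<times> 'b) set \<Rightarrow> 'a \<Rightarrow> 'b set" where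
  "secx P x = {v. (x, v) \<in> P}"
definition secv :: "('a \<times> 'b) set \<Rightarrow> 'b \<Rightarrow> 'a set" where
  "secv P v = {x. (x, v) \<in> P}"

text \<open>R_P = {v. (x_v, v) \<in> P}, with xe the equilibrium map v \<mapsto> x_v.\<close>
definition RP :: "(real^'m \<Rightarrow> real^'n) \<Rightarrow> ((real^'n) \<times> (real^'m)) set \<Rightarrow> (real^'m) set" where
  "RP xe P = {v. (xe v, v) \<in> P}"

definition qproj :: "real^'m^'m \<Rightarrow> (real^'m) set \<Rightarrow> real^'m \<Rightarrow> real^'m" where
  "qproj Q R r = (THE w. w \<in> R \<and> (\<forall>u\<in>R. qnorm2 Q (w - r) \<le> qnorm2 Q (u - r)))"

definition cg_step :: "real^'m^'m \<Rightarrow> ((real^'n) \<times> (real^'m)) set \<Rightarrow> real^'n \<Rightarrow> real^'m \<Rightarrow> real^'m \<Rightarrow> real^'m \<Rightarrow> real^'m" where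
  "cg_step Q P x r vprev vc =
     (if (x, vc) \<in> P \<and> qnorm2 Q (vc - r) \<le> qnorm2 Q (vprev - r) - qnorm2 Q (vc - vprev)
      then vc else vprev)"

end

theory Submission
  imports Defs
begin

lemma q_scale: "qnorm2 Q (c *\<^sub>R w) = c^2 * qnorm2 Q w"
proof -
  have "Q *v (c *\<^sub>R w) = c *\<^sub>R (Q *v w)"
    using linear_cmul[OF matrix_vector_mul_linear[of Q]] by simp
  then show ?thesis by (simp add: qnorm2_def power2_eq_square)
qed

lemma q_lower:
  fixes Q :: "real^'m^'m"
  assumes Qpd: "\<And>w. w \<noteq> 0 \<Longrightarrow> qnorm2 Q w > 0"
  shows "\<exists>c>0. \<forall>w. c * (norm w)^2 \<le> qnorm2 Q w"
proof -
  have cont: "continuous_on (sphere (0::real^'m) 1) (\<lambda>w. qnorm2 Q w)"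
    unfolding qnorm2_def by (intro continuous_intros)
  have ne: "sphere (0::real^'m) 1 \<noteq> {}"
    using norm_axis_1 by (metis mem_sphere_0 empty_iff)
  obtain w0 where w0: "w0 \<in> sphere 0 1" and min: "\<And>w. w \<in> sphere 0 1 \<Longrightarrow> qnorm2 Q w0 \<le> qnorm2 Q w"
    using continuous_attains_inf[OF compact_sphere ne cont] by blast
  have "w0 \<noteq> 0" using w0 by auto
  then have pos: "qnorm2 Q w0 > 0" using Qpd by blast
  have "qnorm2 Q w0 * (norm w)^2 \<le> qnorm2 Q w" for w
  proof (cases "w = 0")
    case True then show ?thesis by (simp add: qnorm2_def)
  next
    case False
    then have "(1/norm w) *\<^sub>R w \<in> sphere 0 1" by simp
    then have "qnorm2 Q w0 \<le> (1/norm w)^2 * qnorm2 Q w" using min q_scale by metis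
    then show ?thesis using False by (simp add: field_simps)
  qed
  then show ?thesis using pos by blast
qed

theorem theorem2:
  fixes f :: "real^'n \<Rightarrow> real^'m \<Rightarrow> real^'n"
    and C P :: "((real^'n) \<times> (real^'m)) set"
    and Q :: "real^'m^'m"
    and xe :: "real^'m \<Rightarrow> real^'n"
    and x :: "nat \<Rightarrow> real^'n"
    and v cand r :: "nat \<Rightarrow> real^'m"
  assumes Qsym: "transpose Q = Q"
    and Qpd: "\<And>w. w \<noteq> 0 \<Longrightarrow> qnorm2 Q w > 0"
    \<comment> \<open>A2\<close>
    and A2_eq: "\<And>w. f (xe w) w = xe w"
    and A2_uniq: "\<And>w y. f y w = y \<Longrightarrow> y = xe w"
    and A2_lip: "\<exists>L. L-lipschitz_on UNIV xe"
    and A2_RP: "closed (RP xe P) \<and> convex (RP xe P)"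
    and A2_Px: "\<And>y. closed (secx P y) \<and> convex (secx P y)"
    \<comment> \<open>A3\<close>
    and A3: "\<exists>\<epsilon>>0. \<forall>w\<in>RP xe P. ball (xe w) \<epsilon> \<subseteq> secv P w"
    \<comment> \<open>A4\<close>
    and A4: "P \<subseteq> Oinf f C \<and> Oinf f C \<subseteq> C"
    \<comment> \<open>A5\<close>
    and A5: "\<And>vs xs. (\<forall>t. xs (Suc t) = f (xs t) (vs t)) \<Longrightarrow>
               (\<lambda>t. vs (Suc t) - vs t) \<longlonglongrightarrow> 0 \<Longrightarrow>
               (\<lambda>t. xs t - xe (vs t)) \<longlonglongrightarrow> 0"
    \<comment> \<open>R_P nonempty, implicit in the definition of r*(t) as an argmin over R_P\<close>
    and RP_ne: "RP xe P \<noteq> {}"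
    \<comment> \<open>closed loop and governor\<close>
    and dyn: "\<And>t. x (Suc t) = f (x t) (v t)"
    and init: "(x 0, v 0) \<in> P"
    and cg: "\<And>t. t \<ge> 1 \<Longrightarrow> v t = cg_step Q P (x t) (r t) (v (t - 1)) (cand t)"
    and hyp: "\<exists>\<epsilon>' \<delta>'. \<epsilon>' > 0 \<and> \<delta>' > 0 \<and>
       (\<forall>t\<ge>1. norm (x t - xe (v (t - 1))) < \<epsilon>' \<longrightarrow>
          (x t, v t) \<in> P \<and>
          qnorm2 Q (v t - qproj Q (RP xe P) (r t))
            \<le> max 0 (qnorm2 Q (v (t - 1) - qproj Q (RP xe P) (r t)) - \<delta>'\<^sup>2))"
  shows "(\<forall>t. (x t, v t) \<in> C)
    \<and> (\<forall>r0 th. (\<forall>t\<ge>th. r t = r0) \<and> r0 \<in> RP xe P \<longrightarrow> (\<exists>T. \<forall>t\<ge>T. v t = r0))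
    \<and> (\<forall>r0 th. (\<forall>t\<ge>th. r t = r0) \<and> r0 \<notin> RP xe P \<longrightarrow>
          (\<exists>T. \<forall>t\<ge>T. v t = qproj Q (RP xe P) r0))"
proof -
  obtain \<epsilon>' \<delta>' where ep: "\<epsilon>' > 0" and dp: "\<delta>' > 0" and H:
    "\<forall>t\<ge>1. norm (x t - xe (v (t - 1))) < \<epsilon>' \<longrightarrow>
          (x t, v t) \<in> P \<and>
          qnorm2 Q (v t - qproj Q (RP xe P) (r t))
            \<le> max 0 (qnorm2 Q (v (t - 1) - qproj Q (RP xe P) (r t)) - \<delta>'\<^sup>2)"
    using hyp by blast
  have qnn: "qnorm2 Q w \<ge> 0" for w
  proof (cases "w = 0")
    case True then show ?thesis by (simp add: qnorm2_def)
  next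
    case False then show ?thesis using Qpd less_imp_le by blast
  qed
  have qz: "qnorm2 Q w \<le> 0 \<Longrightarrow> w = 0" for w using Qpd not_le by blast
  have q0: "qnorm2 Q 0 = 0" by (simp add: qnorm2_def)
  obtain c where cpos: "c > 0" and cle: "\<And>w. c * (norm w)^2 \<le> qnorm2 Q w"
    using q_lower[OF Qpd] by blast
  have shift: "(f y w, w) \<in> Oinf f C" if "(y, w) \<in> Oinf f C" for y w
  proof -
    have e: "traj f (f y w) w t = traj f y w (Suc t)" for t
      unfolding traj_def by (simp add: funpow_Suc_right del: funpow.simps)
    have "\<forall>t. (traj f y w t, w) \<in> C" using that unfolding Oinf_def by simp
    then have "\<forall>t. (traj f (f y w) w t, w) \<in> C" using e by metis
    then show ?thesis unfolding Oinf_def by simp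
  qed
  have O: "(x t, v t) \<in> Oinf f C" for t
  proof (induction t)
    case 0 then show ?case using init A4 by blast
  next
    case (Suc t)
    have vs: "v (Suc t) = cg_step Q P (x (Suc t)) (r (Suc t)) (v t) (cand (Suc t))"
      using cg[of "Suc t"] by simp
    show ?case
    proof (cases "(x (Suc t), cand (Suc t)) \<in> P \<and> qnorm2 Q (cand (Suc t) - r (Suc t)) \<le> qnorm2 Q (v t - r (Suc t)) - qnorm2 Q (cand (Suc t) - v t)")
      case True
      then show ?thesis using vs A4 unfolding cg_step_def by auto
    next
      case False
      then have "v (Suc t) = v t" using vs unfolding cg_step_def by auto
      then show ?thesis using shift[OF Suc] dyn[of t] by simp
    qed
  qed
  have part1: "\<forall>t. (x t, v t) \<in> C" using O A4 by blast
  obtain L where Lip: "L-lipschitz_on UNIV xe" using A2_lip by blast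
  have conv: "\<exists>T. \<forall>t\<ge>T. v t = qproj Q (RP xe P) r0" if rr: "\<forall>t\<ge>th. r t = r0" for r0 th
  proof -
    define V where "V t = qnorm2 Q (v t - r0)" for t
    define rs where "rs = qproj Q (RP xe P) r0"
    have step: "qnorm2 Q (v (Suc t) - v t) \<le> V t - V (Suc t)" if "t \<ge> th" for t
    proof -
      have vs: "v (Suc t) = cg_step Q P (x (Suc t)) r0 (v t) (cand (Suc t))"
        using cg[of "Suc t"] rr that by simp
      show ?thesis
      proof (cases "(x (Suc t), cand (Suc t)) \<in> P \<and> qnorm2 Q (cand (Suc t) - r0) \<le> qnorm2 Q (v t - r0) - qnorm2 Q (cand (Suc t) - v t)")
        case True
        then show ?thesis using vs unfolding cg_step_def V_def by auto
      next
        case False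
        then have "v (Suc t) = v t" using vs unfolding cg_step_def by auto
        then show ?thesis unfolding V_def using q0 by simp
      qed
    qed
    define W where "W k = V (k + th)" for k
    have decW: "decseq W"
      unfolding decseq_Suc_iff W_def using step qnn
      by (metis add_Suc le_add2 diff_ge_0_iff_ge order.trans)
    obtain l where Wl: "W \<longlonglongrightarrow> l"
      using decseq_convergent[OF decW, of 0] qnn unfolding W_def V_def by blast
    have Wd: "(\<lambda>k. W k - W (Suc k)) \<longlonglongrightarrow> 0"
      using tendsto_diff[OF Wl LIMSEQ_Suc[OF Wl]] by simp
    define D where "D t = v (Suc t) - v t" for t
    have qD: "(\<lambda>k. qnorm2 Q (D (k + th))) \<longlonglongrightarrow> 0"
    proof (rule tendsto_sandwich[OF _ _ tendsto_const Wd])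
      show "\<forall>\<^sub>F k in sequentially. 0 \<le> qnorm2 Q (D (k + th))" using qnn by simp
      show "\<forall>\<^sub>F k in sequentially. qnorm2 Q (D (k + th)) \<le> W k - W (Suc k)"
        using step unfolding W_def D_def by simp
    qed
    have "(\<lambda>k. D (k + th)) \<longlonglongrightarrow> 0"
    proof (rule Lim_null_comparison)
      show "\<forall>\<^sub>F k in sequentially. norm (D (k + th)) \<le> sqrt (qnorm2 Q (D (k + th)) / c)"
      proof (rule always_eventually, rule allI)
        fix k
        have "(norm (D (k + th)))^2 \<le> qnorm2 Q (D (k + th)) / c"
          using cle[of "D (k + th)"] cpos by (simp add: field_simps)
        then have "sqrt ((norm (D (k + th)))^2) \<le> sqrt (qnorm2 Q (D (k + th)) / c)"
          using real_sqrt_le_mono by blast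
        then show "norm (D (k + th)) \<le> sqrt (qnorm2 Q (D (k + th)) / c)" by simp
      qed
      show "(\<lambda>k. sqrt (qnorm2 Q (D (k + th)) / c)) \<longlonglongrightarrow> 0"
        using tendsto_real_sqrt[OF tendsto_divide[OF qD tendsto_const[of c]]] cpos by simp
    qed
    then have Dlim: "D \<longlonglongrightarrow> 0" by (rule LIMSEQ_offset)
    have A5r: "(\<lambda>t. x t - xe (v t)) \<longlonglongrightarrow> 0"
      using A5[of x v] dyn Dlim unfolding D_def by blast
    have XD: "(\<lambda>t. xe (v (Suc t)) - xe (v t)) \<longlonglongrightarrow> 0"
    proof (rule Lim_null_comparison)
      show "\<forall>\<^sub>F t in sequentially. norm (xe (v (Suc t)) - xe (v t)) \<le> L * norm (D t)"
        using lipschitz_onD[OF Lip] unfolding D_def dist_norm by simp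
      show "(\<lambda>t. L * norm (D t)) \<longlonglongrightarrow> 0"
        using tendsto_mult[OF tendsto_const[of L] tendsto_norm[OF Dlim]] by simp
    qed
    have E: "(\<lambda>t. x (Suc t) - xe (v t)) \<longlonglongrightarrow> 0"
    proof -
      have "(\<lambda>t. (x (Suc t) - xe (v (Suc t))) + (xe (v (Suc t)) - xe (v t))) \<longlonglongrightarrow> 0 + 0"
        using tendsto_add[OF LIMSEQ_Suc[OF A5r] XD] .
      then show ?thesis by simp
    qed
    obtain N where N: "\<And>t. t \<ge> N \<Longrightarrow> norm (x (Suc t) - xe (v t)) < \<epsilon>'"
      using E ep unfolding LIMSEQ_iff by fastforce
    define a where "a t = qnorm2 Q (v t - rs)" for t
    define M where "M = max N th"
    have astep: "a (Suc t) \<le> max 0 (a t - \<delta>'\<^sup>2)" if "t \<ge> M" for t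
    proof -
      have "norm (x (Suc t) - xe (v (Suc t - 1))) < \<epsilon>'" using N that unfolding M_def by simp
      moreover have "r (Suc t) = r0" using rr that unfolding M_def by simp
      ultimately show ?thesis using H[rule_format, of "Suc t"] unfolding a_def rs_def by simp
    qed
    have abound: "a t \<le> max 0 (a M - real (t - M) * \<delta>'\<^sup>2)" if "t \<ge> M" for t
      using that
    proof (induction t rule: dec_induct)
      case base then show ?case by simp
    next
      case (step t)
      have "a (Suc t) \<le> max 0 (a t - \<delta>'\<^sup>2)" using astep step.hyps by simp
      also have "\<dots> \<le> max 0 (max 0 (a M - real (t - M) * \<delta>'\<^sup>2) - \<delta>'\<^sup>2)"
        using step.IH by simp
      also have "\<dots> = max 0 (a M - real (Suc t - M) * \<delta>'\<^sup>2)"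
      proof -
        have m: "max 0 (max 0 y - d) = max 0 (y - d)" if "d > 0" for y d :: real
          using that by (simp add: max_def)
        have "real (Suc t - M) = real (t - M) + 1" using step.hyps by (simp add: Suc_diff_le)
        then have "a M - real (Suc t - M) * \<delta>'\<^sup>2 = a M - real (t - M) * \<delta>'\<^sup>2 - \<delta>'\<^sup>2"
          by (simp add: algebra_simps)
        moreover have "max 0 (max 0 (a M - real (t - M) * \<delta>'\<^sup>2) - \<delta>'\<^sup>2) = max 0 (a M - real (t - M) * \<delta>'\<^sup>2 - \<delta>'\<^sup>2)"
          using m[of "\<delta>'\<^sup>2" "a M - real (t - M) * \<delta>'\<^sup>2"] dp by simp
        ultimately show ?thesis by metis
      qed
      finally show ?case .
    qed
    obtain k :: nat where k: "a M / \<delta>'\<^sup>2 \<le> real k" using real_arch_simple by blast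
    have "v t = rs" if "t \<ge> M + k" for t
    proof -
      have "a M \<le> real k * \<delta>'\<^sup>2" using k dp by (simp add: field_simps)
      also have "\<dots> \<le> real (t - M) * \<delta>'\<^sup>2"
        using that by (intro mult_right_mono) auto
      finally have "a t \<le> 0" using abound[of t] that by simp
      then have "v t - rs = 0" using qz unfolding a_def by blast
      then show ?thesis by simp
    qed
    then show ?thesis unfolding rs_def by blast
  qed
  have proj: "qproj Q (RP xe P) r0 = r0" if "r0 \<in> RP xe P" for r0
    unfolding qproj_def
  proof (rule the_equality)
    show "r0 \<in> RP xe P \<and> (\<forall>u\<in>RP xe P. qnorm2 Q (r0 - r0) \<le> qnorm2 Q (u - r0))"
      using that qnn q0 by simp
    fix w assume "w \<in> RP xe P \<and> (\<forall>u\<in>RP xe P. qnorm2 Q (w - r0) \<le> qnorm2 Q (u - r0))"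
    then have "qnorm2 Q (w - r0) \<le> 0" using that q0 by fastforce
    then have "w - r0 = 0" using qz by blast
    then show "w = r0" by simp
  qed
  show ?thesis using part1 conv proj by metis
qed

end
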